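(* Let $K$ be a field, $P=K[x_1,\dots,x_n]$, $g_1,\dots,g_r\in P$, $I=\langle g_1,\dots,g_r\rangle$, and let $Z=(z_1,\dots,z_s)$ be a tuple of distinct indeterminates among $x_1,\dots,x_n$. Then the following are equivalent: (a) the procedure $\mathrm{CHECK}$ applied to $(g_1,\dots,g_r)$ and $Z$ returns a weight tuple $W\in\mathbb{N}^n$ (rather than ``Fail''); (b) there exists a $Z$-separating tuple $(f_1,\dots,f_s)$ of polynomials in $I$ with $f_1,\dots,f_s\in\langle g_1,\dots,g_r\rangle_K$.
   Context: $\operatorname{Supp}(f)$ is the set of terms occurring in $f$; $\operatorname{Lin}(f)$ is the homogeneous degree-1 component of $f$; $\langle\cdot\rangle_K$ denotes $K$-linear span. A tuple $(f_1,\dots,f_s)$ of polynomials in an ideal $I$ is $Z$-separating if there is a term ordering $\sigma$ with $\operatorname{LT}_\sigma(f_i)=z_i$ for all $i$. Procedure $\mathrm{LI}$ (linear interreduction), applied to a tuple $Z=(z_1,\dots,z_s)$ of distinct indeterminates and polynomials $g_1,\dots,g_r$: let $t_1>\dots>t_m$ (lexicographic order, $x_1>\dots>x_n$) be the terms of $\bigcup_j\operatorname{Supp}(g_j)$ other than $z_1,\dots,z_s$; form the coefficient matrix $M$ of $g_1,\dots,g_r$ w.r.t. column order $(z_1,\dots,z_s,t_1,\dots,t_m)$; output the polynomials whose coefficient vectors are the nonzero rows of the reduced row echelon form of $M$, in order. Procedure $\mathrm{CHECK}$ on input $(g_1,\dots,g_r)$ and $Z$: (1) set $w_1=\dots=w_n=0$,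 $\delta=\max_j\deg(g_j)$, $d=1$. (2) In each $g_j$ delete every monomial not divisible by some indeterminate of $Z$. (3) If $\dim_K\langle\operatorname{Lin}(g_1),\dots,\operatorname{Lin}(g_r)\rangle_K<\#Z$, return ``Fail''. (4) Repeat: (i) replace the current list $g_1,\dots,g_r$ by the output of $\mathrm{LI}$ applied to the current $Z$ and the current list; (ii) let $\widetilde Z$ be the set of indeterminates of the current $Z$ that occur as elements of the current list; (iii) if $\widetilde Z=\emptyset$, return ``Fail''; (iv) for each $z\in\widetilde Z$, say $z=x_k$, set $w_k=d$ and remove $z$ from $Z$; (v) in each current $g_j$ delete every monomial not divisible by some indeterminate of the (updated) $Z$; (vi) replace $d$ by $\delta d+1$; until $Z$ is empty. (5) Return $W=(w_1,\dots,w_n)$. *)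

theory Defs
  imports "HOL-Library.Poly_Mapping" "Jordan_Normal_Form.Gauss_Jordan_Elimination"
begin

text \<open>The indeterminate
  x_(k+1) is encoded as the natural number k; a term (power product) is a finitely
  supported exponent vector nat-to-nat finitely supported map, and a polynomial is a finitely supported
  map from terms to coefficients.\<close>

type_synonym pterm = "nat \<Rightarrow>\<^sub>0 nat"
type_synonym 'a mpoly = "pterm \<Rightarrow>\<^sub>0 'a"

definition is_term :: "nat \<Rightarrow> pterm \<Rightarrow> bool" where
  "is_term n t \<longleftrightarrow> Poly_Mapping.keys t \<subseteq> {..<n}"

definition in_P :: "nat \<Rightarrow> 'a::zero mpoly \<Rightarrow> bool" where
  "in_P n f \<longleftrightarrow> (\<forall>t\<in>Poly_Mapping.keys f. is_term n t)"

definition var_term :: "nat \<Rightarrow> pterm" where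
  "var_term z = Poly_Mapping.single z 1"

definition var :: "nat \<Rightarrow> 'a::{zero,one} mpoly" where
  "var z = Poly_Mapping.single (var_term z) 1"

definition tdeg :: "pterm \<Rightarrow> nat" where
  "tdeg t = (\<Sum>i\<in>Poly_Mapping.keys t. Poly_Mapping.lookup t i)"

definition pdeg :: "'a::zero mpoly \<Rightarrow> nat" where
  "pdeg f = Max (insert 0 (tdeg ` Poly_Mapping.keys f))"

definition restrict_terms :: "(pterm \<Rightarrow> bool) \<Rightarrow> 'a::comm_monoid_add mpoly \<Rightarrow> 'a mpoly" where
  "restrict_terms Q f = (\<Sum>t\<in>{t\<in>Poly_Mapping.keys f. Q t}. Poly_Mapping.single t (Poly_Mapping.lookup f t))"

definition Lin :: "'a::comm_monoid_add mpoly \<Rightarrow> 'a mpoly" where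
  "Lin f = restrict_terms (\<lambda>t. tdeg t = 1) f"

definition del_nondiv :: "nat list \<Rightarrow> 'a::comm_monoid_add mpoly \<Rightarrow> 'a mpoly" where
  "del_nondiv zs f = restrict_terms (\<lambda>t. \<exists>z\<in>set zs. 0 < Poly_Mapping.lookup t z) f"

definition pscale :: "'a::field \<Rightarrow> 'a mpoly \<Rightarrow> 'a mpoly" where
  "pscale c f = Poly_Mapping.map ((*) c) f"

abbreviation Kspan :: "'a::field mpoly set \<Rightarrow> 'a mpoly set" where
  "Kspan S \<equiv> module.span pscale S"

abbreviation Kdim :: "'a::field mpoly set \<Rightarrow> nat" where
  "Kdim S \<equiv> vector_space.dim pscale S"

definition ideal_P :: "nat \<Rightarrow> 'a::field mpoly list \<Rightarrow> 'a mpoly set" where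
  "ideal_P n gs = {\<Sum>j<length gs. h j * gs ! j | h. \<forall>j<length gs. in_P n (h j)}"

definition term_ordering :: "nat \<Rightarrow> (pterm \<Rightarrow> pterm \<Rightarrow> bool) \<Rightarrow> bool" where
  "term_ordering n tle \<longleftrightarrow>
     (\<forall>t. is_term n t \<longrightarrow> tle t t) \<and>
     (\<forall>t s. is_term n t \<longrightarrow> is_term n s \<longrightarrow> tle t s \<longrightarrow> tle s t \<longrightarrow> t = s) \<and>
     (\<forall>t s u. is_term n t \<longrightarrow> is_term n s \<longrightarrow> is_term n u \<longrightarrow> tle t s \<longrightarrow> tle s u \<longrightarrow> tle t u) \<and>
     (\<forall>t s. is_term n t \<longrightarrow> is_term n s \<longrightarrow> tle t s \<or> tle s t) \<and>
     (\<forall>t s u. is_term n t \<longrightarrow> is_term n s \<longrightarrow> is_term n u \<longrightarrow> tle t s \<longrightarrow> tle (t + u) (s + u)) \<and>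
     (\<forall>t. is_term n t \<longrightarrow> tle 0 t)"

definition LT :: "(pterm \<Rightarrow> pterm \<Rightarrow> bool) \<Rightarrow> 'a::zero mpoly \<Rightarrow> pterm" where
  "LT tle f = (THE t. t \<in> Poly_Mapping.keys f \<and> (\<forall>s\<in>Poly_Mapping.keys f. tle s t))"

definition Z_separating :: "nat \<Rightarrow> nat list \<Rightarrow> 'a::zero mpoly list \<Rightarrow> bool" where
  "Z_separating n zs fs \<longleftrightarrow> length fs = length zs \<and>
     (\<exists>tle. term_ordering n tle \<and>
        (\<forall>i<length zs. fs ! i \<noteq> 0 \<and> LT tle (fs ! i) = var_term (zs ! i)))"

definition lex_gt :: "pterm \<Rightarrow> pterm \<Rightarrow> bool" where
  "lex_gt t s \<longleftrightarrow> (\<exists>k. Poly_Mapping.lookup s k < Poly_Mapping.lookup t k \<and> (\<forall>i<k. Poly_Mapping.lookup t i = Poly_Mapping.lookup s i))"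

definition LI :: "nat list \<Rightarrow> 'a::field mpoly list \<Rightarrow> 'a mpoly list" where
  "LI zs gs = (let
     T = (\<Union>g\<in>set gs. Poly_Mapping.keys g) - var_term ` set zs;
     ts = (THE ts. sorted_wrt lex_gt ts \<and> set ts = T);
     cols = map var_term zs @ ts;
     M = mat (length gs) (length cols) (\<lambda>(i, j). Poly_Mapping.lookup (gs ! i) (cols ! j));
     R = gauss_jordan_single M;
     rows = filter (\<lambda>v. v \<noteq> 0\<^sub>v (length cols)) (map (row R) [0..<dim_row R])
   in map (\<lambda>v. \<Sum>j<length cols. Poly_Mapping.single (cols ! j) (v $ j)) rows)"

text \<open>The repeat-loop (step 4) of CHECK; arguments: delta, d, current Z, current list, weights.\<close>
function check_loop :: "nat \<Rightarrow> nat \<Rightarrow> nat list \<Rightarrow> 'a::field mpoly list \<Rightarrow> (nat \<Rightarrow> nat)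
    \<Rightarrow> (nat \<Rightarrow> nat) option" where
  "check_loop \<delta> d zs gs w = (let
     gs1 = LI zs gs;
     zt = filter (\<lambda>z. var z \<in> set gs1) zs
   in if zt = [] then None
      else (let
        w' = (\<lambda>k. if k \<in> set zt then d else w k);
        zs' = filter (\<lambda>z. z \<notin> set zt) zs;
        gs2 = map (del_nondiv zs') gs1
      in if zs' = [] then Some w' else check_loop \<delta> (\<delta> * d + 1) zs' gs2 w'))"
  by pat_completeness auto
termination
proof (relation "measure (\<lambda>(\<delta>, d, zs, gs, w). length zs)", goal_cases)
  case 1 then show ?case by simp
next
  case (2 \<delta> d zs gs w gs1 zt w' zs' gs2)
  then obtain z where "z \<in> set zs" "z \<in> set zt" by (metis filter_empty_conv filter_is_subset list.set_sel(1) subsetD)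
  then have "length (filter (\<lambda>z. z \<notin> set zt) zs) < length zs"
    by (metis (mono_tags, lifting) length_filter_less)
  with 2 show ?case by simp
qed

text \<open>Procedure CHECK: None means "Fail", Some W the weight tuple (w_1..w_n).\<close>
definition CHECK :: "nat \<Rightarrow> 'a::field mpoly list \<Rightarrow> nat list \<Rightarrow> nat list option" where
  "CHECK n gs zs = (let
     \<delta> = Max (insert 0 (pdeg ` set gs));
     gs' = map (del_nondiv zs) gs
   in if Kdim (Lin ` set gs') < length zs then None
      else map_option (\<lambda>w. map w [0..<n]) (check_loop \<delta> 1 zs gs' (\<lambda>_. 0)))"

end

theory Submission
  imports Defs
begin

lemma lex_gt_iff: "lex_gt t s \<longleftrightarrow> s < t"
  unfolding lex_gt_def by transfer (auto simp add: less_fun_def)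

lemma lookup_pscale[simp]: "Poly_Mapping.lookup (pscale c f) t = c * Poly_Mapping.lookup f t"
  unfolding pscale_def by transfer (simp add: when_def)

lemma pscale_conv: "pscale c f = Poly_Mapping.single 0 c * f"
  unfolding pscale_def by (rule mult_map_scale_conv_mult)

interpretation PV: vector_space "pscale :: 'a::field \<Rightarrow> 'a mpoly \<Rightarrow> 'a mpoly"
  by unfold_locales (auto intro!: poly_mapping_eqI simp: lookup_add algebra_simps)

lemma lookup_restrict_terms:
  "Poly_Mapping.lookup (restrict_terms Q f) t = (if Q t then Poly_Mapping.lookup f t else 0)"
proof -
  have "Poly_Mapping.lookup (restrict_terms Q f) t =
     (\<Sum>s\<in>{s\<in>Poly_Mapping.keys f. Q s}. if s = t then Poly_Mapping.lookup f s else 0)"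
    unfolding restrict_terms_def lookup_sum by (simp add: lookup_single when_def)
  also have "\<dots> = (if Q t then Poly_Mapping.lookup f t else 0)"
    by (simp add: in_keys_iff)
  finally show ?thesis .
qed

lemma restrict_terms_linear: "module_hom pscale pscale (restrict_terms Q :: 'a::field mpoly \<Rightarrow> _)"
  by unfold_locales (auto intro!: poly_mapping_eqI simp: lookup_restrict_terms lookup_add)

lemma Lin_linear: "module_hom pscale pscale (Lin :: 'a::field mpoly \<Rightarrow> _)"
  unfolding Lin_def[abs_def] by (rule restrict_terms_linear)

definition D :: "nat list \<Rightarrow> pterm \<Rightarrow> bool" where
  "D zs t \<longleftrightarrow> (\<exists>z\<in>set zs. 0 < Poly_Mapping.lookup t z)"

lemma lookup_del_nondiv:
  "Poly_Mapping.lookup (del_nondiv zs f) t = (if D zs t then Poly_Mapping.lookup f t else 0)"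
  unfolding del_nondiv_def D_def by (simp add: lookup_restrict_terms)

lemma del_nondiv_linear: "module_hom pscale pscale (del_nondiv zs :: 'a::field mpoly \<Rightarrow> _)"
  unfolding del_nondiv_def[abs_def] by (rule restrict_terms_linear)

lemma del_nondiv_comp: "set zs' \<subseteq> set zs \<Longrightarrow> del_nondiv zs' (del_nondiv zs f) = del_nondiv zs' f"
  by (rule poly_mapping_eqI) (auto simp: lookup_del_nondiv D_def)

lemma span_image_lin:
  assumes "module_hom pscale pscale (h :: 'a::field mpoly \<Rightarrow> 'a mpoly)"
  shows "Kspan (h ` S) = h ` Kspan S"
  using assms by (rule module_hom.span_image)

lemma keys_span:
  assumes "(f :: 'a::field mpoly) \<in> Kspan S"
  shows "Poly_Mapping.keys f \<subseteq> (\<Union>g\<in>S. Poly_Mapping.keys g)"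
  using assms
proof (induction rule: PV.span_induct_alt)
  case base then show ?case by simp
next
  case (step c x y)
  have "Poly_Mapping.keys (pscale c x + y) \<subseteq> Poly_Mapping.keys (pscale c x) \<union> Poly_Mapping.keys y"
    by (rule keys_add)
  moreover have "Poly_Mapping.keys (pscale c x) \<subseteq> Poly_Mapping.keys x"
    by (auto simp: in_keys_iff)
  ultimately show ?case using step by blast
qed

lemma in_P_add: "in_P n f \<Longrightarrow> in_P n g \<Longrightarrow> in_P n (f + g)"
  unfolding in_P_def using keys_add[of f g] by blast

lemma in_P_pscale: "in_P n f \<Longrightarrow> in_P n (pscale c f)"
  unfolding in_P_def by (auto simp: in_keys_iff)

lemma ideal_memI: "(\<forall>j<length gs. in_P n (h j)) \<Longrightarrow> (\<Sum>j<length gs. h j * gs!j) \<in> ideal_P n gs"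
  unfolding ideal_P_def by blast

lemma span_in_ideal:
  fixes gs :: "'a::field mpoly list"
  assumes "f \<in> Kspan (set gs)"
  shows "f \<in> ideal_P n gs"
proof -
  have sub: "PV.subspace (ideal_P n gs)"
    unfolding PV.subspace_def
  proof (intro conjI ballI allI)
    show "0 \<in> ideal_P n gs"
      unfolding ideal_P_def by (rule CollectI, rule exI[of _ "\<lambda>_. 0"]) (simp add: in_P_def)
  next
    fix x y assume "x \<in> ideal_P n gs" "y \<in> ideal_P n gs"
    then obtain h1 h2 where h1: "x = (\<Sum>j<length gs. h1 j * gs ! j)" "\<forall>j<length gs. in_P n (h1 j)"
      and h2: "y = (\<Sum>j<length gs. h2 j * gs ! j)" "\<forall>j<length gs. in_P n (h2 j)"
      unfolding ideal_P_def by blast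
    show "x + y \<in> ideal_P n gs"
      unfolding ideal_P_def
      by (rule CollectI, rule exI[of _ "\<lambda>j. h1 j + h2 j"])
        (simp add: h1 h2 in_P_add distrib_right sum.distrib)
  next
    fix c x assume "x \<in> ideal_P n gs"
    then obtain h1 where h1: "x = (\<Sum>j<length gs. h1 j * gs ! j)" "\<forall>j<length gs. in_P n (h1 j)"
      unfolding ideal_P_def by blast
    have e: "pscale c x = (\<Sum>j<length gs. pscale c (h1 j) * gs ! j)"
      by (simp only: h1 pscale_conv sum_distrib_left mult.assoc)
    have "\<forall>j<length gs. in_P n (pscale c (h1 j))" using h1 in_P_pscale by blast
    with e show "pscale c x \<in> ideal_P n gs"
      unfolding ideal_P_def by (intro CollectI exI[of _ "\<lambda>j. pscale c (h1 j)"]) simp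
  qed
  have "set gs \<subseteq> ideal_P n gs"
  proof
    fix g assume "g \<in> set gs"
    then obtain k where k: "k < length gs" "g = gs ! k" by (auto simp: in_set_conv_nth)
    have "(\<Sum>j<length gs. (if j = k then 1 else 0) * gs ! j) = (\<Sum>j<length gs. if j = k then gs ! j else 0)"
      by (rule sum.cong) auto
    also have "\<dots> = g" using k by simp
    finally have s1: "(\<Sum>j<length gs. (if j = k then 1 else 0) * gs ! j) = g" .
    have s2: "\<forall>j<length gs. in_P n (if j = k then 1 else (0::'a mpoly))"
      by (simp add: in_P_def is_term_def)
    have "(\<Sum>j<length gs. (if j = k then 1 else 0) * gs ! j) \<in> ideal_P n gs"
      using ideal_memI[of gs n "\<lambda>j. if j = k then 1 else 0"] s2 by blast
    then show "g \<in> ideal_P n gs" using s1 by (rule back_subst[where P="\<lambda>x. x \<in> ideal_P n gs"])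
  qed
  then have "Kspan (set gs) \<subseteq> ideal_P n gs" by (rule PV.span_minimal[OF _ sub])
  then show ?thesis using assms by (rule subsetD)
qed

lemma zero_le_pterm: "(0::pterm) \<le> t"
proof (cases "t = 0")
  case True then show ?thesis by simp
next
  case False
  then obtain k0 where "Poly_Mapping.lookup t k0 \<noteq> 0"
    by (metis poly_mapping_eqI lookup_zero)
  define k where "k = (LEAST k. Poly_Mapping.lookup t k \<noteq> 0)"
  have k1: "Poly_Mapping.lookup t k \<noteq> 0" unfolding k_def by (rule LeastI) fact
  have k2: "Poly_Mapping.lookup t k' = 0" if "k' < k" for k'
    using not_less_Least[of k' "\<lambda>k. Poly_Mapping.lookup t k \<noteq> 0"] that unfolding k_def by blast
  have "less_fun (Poly_Mapping.lookup 0) (Poly_Mapping.lookup t)"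
    by (rule less_funI, rule exI[of _ k]) (use k1 k2 in auto)
  then have "0 < t" by (simp add: less_poly_mapping.rep_eq)
  then show ?thesis by simp
qed

definition wt :: "(nat \<Rightarrow> nat) \<Rightarrow> pterm \<Rightarrow> nat" where
  "wt W t = (\<Sum>i\<in>Poly_Mapping.keys t. Poly_Mapping.lookup t i * W i)"

lemma wt_superset:
  assumes "finite A" "Poly_Mapping.keys t \<subseteq> A"
  shows "wt W t = (\<Sum>i\<in>A. Poly_Mapping.lookup t i * W i)"
  unfolding wt_def
  by (rule sum.mono_neutral_left) (use assms in \<open>auto simp: in_keys_iff\<close>)

lemma wt_add: "wt W (t + u) = wt W t + wt W u"
proof -
  let ?A = "Poly_Mapping.keys t \<union> Poly_Mapping.keys u"
  have "wt W (t + u) = (\<Sum>i\<in>?A. Poly_Mapping.lookup (t + u) i * W i)"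
    by (rule wt_superset) (use keys_add[of t u] in auto)
  also have "\<dots> = (\<Sum>i\<in>?A. Poly_Mapping.lookup t i * W i) + (\<Sum>i\<in>?A. Poly_Mapping.lookup u i * W i)"
    by (simp add: lookup_add algebra_simps sum.distrib)
  also have "\<dots> = wt W t + wt W u"
    by (simp add: wt_superset[symmetric])
  finally show ?thesis .
qed

lemma wt_zero[simp]: "wt W 0 = 0"
  by (simp add: wt_def)

lemma wt_var: "wt W (var_term z) = W z"
  by (simp add: wt_def var_term_def)

lemma wt_bound:
  assumes "\<And>i. W i \<le> M"
  shows "wt W t \<le> M * tdeg t"
  unfolding wt_def tdeg_def sum_distrib_left
  by (rule sum_mono) (simp add: assms mult.commute)

lemma wt_cong:
  assumes "\<And>i. i \<in> Poly_Mapping.keys t \<Longrightarrow> W i = W' i"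
  shows "wt W t = wt W' t"
  unfolding wt_def by (rule sum.cong) (simp_all add: assms)

definition wle :: "(nat \<Rightarrow> nat) \<Rightarrow> pterm \<Rightarrow> pterm \<Rightarrow> bool" where
  "wle W t s \<longleftrightarrow> wt W t < wt W s \<or> (wt W t = wt W s \<and> t \<le> s)"

lemma wle_term_ordering: "term_ordering n (wle W)"
  unfolding term_ordering_def wle_def
proof (intro conjI allI impI)
  fix t s u :: pterm
  assume "wt W t < wt W s \<or> wt W t = wt W s \<and> t \<le> s"
  then show "wt W (t + u) < wt W (s + u) \<or> wt W (t + u) = wt W (s + u) \<and> t + u \<le> s + u"
    by (auto simp: wt_add intro: add_right_mono)
next
  fix t :: pterm
  show "wt W 0 < wt W t \<or> wt W 0 = wt W t \<and> 0 \<le> t"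
    using zero_le_pterm[of t] by auto
qed auto

lemma finite_max:
  assumes "finite S" "S \<noteq> {}"
    and tot: "\<And>x y. x \<in> S \<Longrightarrow> y \<in> S \<Longrightarrow> R x y \<or> R y x"
    and tr: "\<And>x y z. x \<in> S \<Longrightarrow> y \<in> S \<Longrightarrow> z \<in> S \<Longrightarrow> R x y \<Longrightarrow> R y z \<Longrightarrow> R x z"
    and rf: "\<And>x. x \<in> S \<Longrightarrow> R x x"
  shows "\<exists>m\<in>S. \<forall>s\<in>S. R s m"
proof -
  have "\<forall>T. T \<subseteq> S \<longrightarrow> T \<noteq> {} \<longrightarrow> (\<exists>m\<in>T. \<forall>s\<in>T. R s m)"
  proof (intro allI impI)
    fix T assume TS: "T \<subseteq> S" and Tne: "T \<noteq> {}"
    have fT: "finite T" using TS assms(1) by (rule finite_subset)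
    show "\<exists>m\<in>T. \<forall>s\<in>T. R s m"
      using fT Tne TS
    proof (induction T rule: finite_ne_induct)
      case (singleton x)
      then have "R x x" using rf by blast
      then show ?case by blast
    next
      case (insert x F)
      from insert.prems have FS: "F \<subseteq> S" and xS: "x \<in> S" by auto
      from insert.IH[OF FS] obtain m where m: "m \<in> F" "\<forall>s\<in>F. R s m" by blast
      have mS: "m \<in> S" using m(1) FS by blast
      show ?case
      proof (cases "R m x")
        case True
        have "\<forall>s\<in>insert x F. R s x"
        proof
          fix s assume s: "s \<in> insert x F"
          show "R s x"
          proof (cases "s = x")
            case True then show ?thesis using rf[OF xS] by simp
          next
            case False
            then have sF: "s \<in> F" using s by simp
            then have "R s m" using m(2) by blast
            moreover have "s \<in> S" using sF FS by blast
            ultimately show ?thesis using tr[of s m x] mS xS \<open>R m x\<close> by blast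
          qed
        qed
        then show ?thesis by blast
      next
        case False
        then have xm: "R x m" using tot[OF mS xS] by blast
        have "\<forall>s\<in>insert x F. R s m" using xm m(2) by simp
        then show ?thesis using m(1) by blast
      qed
    qed
  qed
  then show ?thesis using assms(2) by blast
qed

lemma LT_eqI:
  assumes "t \<in> Poly_Mapping.keys f" "\<forall>s\<in>Poly_Mapping.keys f. tle s t"
    "\<forall>s\<in>Poly_Mapping.keys f. tle t s \<longrightarrow> s = t"
  shows "LT tle f = t"
  unfolding LT_def using assms by (intro the_equality) auto

lemma TO_all1: "term_ordering n tle \<Longrightarrow> (\<forall>t. is_term n t \<longrightarrow> tle t t)"
  unfolding term_ordering_def by (elim conjE) assumption

lemma TO_all2: "term_ordering n tle \<Longrightarrow> (\<forall>t s. is_term n t \<longrightarrow> is_term n s \<longrightarrow> tle t s \<longrightarrow> tle s t \<longrightarrow> t = s)"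
  unfolding term_ordering_def by (elim conjE) assumption

lemma TO_all3: "term_ordering n tle \<Longrightarrow> (\<forall>t s u. is_term n t \<longrightarrow> is_term n s \<longrightarrow> is_term n u \<longrightarrow> tle t s \<longrightarrow> tle s u \<longrightarrow> tle t u)"
  unfolding term_ordering_def by (elim conjE) assumption

lemma TO_all4: "term_ordering n tle \<Longrightarrow> (\<forall>t s. is_term n t \<longrightarrow> is_term n s \<longrightarrow> tle t s \<or> tle s t)"
  unfolding term_ordering_def by (elim conjE) assumption

lemma TO_all5: "term_ordering n tle \<Longrightarrow> (\<forall>t s u. is_term n t \<longrightarrow> is_term n s \<longrightarrow> is_term n u \<longrightarrow> tle t s \<longrightarrow> tle (t + u) (s + u))"
  unfolding term_ordering_def by (elim conjE) assumption

lemma TO_all6: "term_ordering n tle \<Longrightarrow> (\<forall>t. is_term n t \<longrightarrow> tle 0 t)"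
  unfolding term_ordering_def by (elim conjE) assumption

lemma TO_refl: "term_ordering n tle \<Longrightarrow> is_term n t \<Longrightarrow> tle t t"
  using TO_all1 by blast
lemma TO_antisym: "term_ordering n tle \<Longrightarrow> is_term n t \<Longrightarrow> is_term n s \<Longrightarrow> tle t s \<Longrightarrow> tle s t \<Longrightarrow> t = s"
  using TO_all2 by blast
lemma TO_trans: "term_ordering n tle \<Longrightarrow> is_term n t \<Longrightarrow> is_term n s \<Longrightarrow> is_term n u \<Longrightarrow> tle t s \<Longrightarrow> tle s u \<Longrightarrow> tle t u"
  using TO_all3 by blast
lemma TO_total: "term_ordering n tle \<Longrightarrow> is_term n t \<Longrightarrow> is_term n s \<Longrightarrow> tle t s \<or> tle s t"
  using TO_all4 by blast
lemma TO_mult: "term_ordering n tle \<Longrightarrow> is_term n t \<Longrightarrow> is_term n s \<Longrightarrow> is_term n u \<Longrightarrow> tle t s \<Longrightarrow> tle (t + u) (s + u)"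
  using TO_all5 by blast
lemma TO_zero: "term_ordering n tle \<Longrightarrow> is_term n t \<Longrightarrow> tle 0 t"
  using TO_all6 by blast

lemma LT_prop:
  assumes ord: "term_ordering n tle" and P: "in_P n f" and nz: "f \<noteq> 0"
  shows "LT tle f \<in> Poly_Mapping.keys f \<and> (\<forall>s\<in>Poly_Mapping.keys f. tle s (LT tle f))"
proof -
  let ?K = "Poly_Mapping.keys f"
  have terms: "\<And>t. t \<in> ?K \<Longrightarrow> is_term n t" using P unfolding in_P_def by blast
  have ne: "?K \<noteq> {}" using nz by simp
  obtain m where m: "m \<in> ?K" "\<forall>s\<in>?K. tle s m"
  proof -
    have "\<exists>m\<in>?K. \<forall>s\<in>?K. tle s m"
    proof (rule finite_max[OF finite_keys ne])
      show "tle x y \<or> tle y x" if "x \<in> ?K" "y \<in> ?K" for x y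
        by (rule TO_total[OF ord terms[OF that(1)] terms[OF that(2)]])
      show "tle x z" if "x \<in> ?K" "y \<in> ?K" "z \<in> ?K" "tle x y" "tle y z" for x y z
        by (rule TO_trans[OF ord terms[OF that(1)] terms[OF that(2)] terms[OF that(3)] that(4,5)])
      show "tle x x" if "x \<in> ?K" for x
        by (rule TO_refl[OF ord terms[OF that]])
    qed
    then show ?thesis using that by blast
  qed
  have "LT tle f = m"
  proof (rule LT_eqI[of m f tle, OF m])
    show "\<forall>s\<in>?K. tle m s \<longrightarrow> s = m"
    proof (intro ballI impI)
      fix s assume s: "s \<in> ?K" "tle m s"
      show "s = m" by (rule TO_antisym[OF ord terms[OF s(1)] terms[OF m(1)] m(2)[rule_format, OF s(1)] s(2)])
    qed
  qed
  with m show ?thesis by simp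
qed

lemma lookup_sum_single_nth:
  assumes "distinct cs" "k < length cs"
  shows "Poly_Mapping.lookup (\<Sum>j<length cs. Poly_Mapping.single (cs ! j) (a j)) (cs ! k) = a k"
proof -
  have "Poly_Mapping.lookup (\<Sum>j<length cs. Poly_Mapping.single (cs ! j) (a j)) (cs ! k)
      = (\<Sum>j<length cs. if j = k then a j else 0)"
    unfolding lookup_sum
  proof (rule sum.cong[OF refl])
    fix j assume "j \<in> {..<length cs}"
    then have "cs ! j = cs ! k \<longleftrightarrow> j = k" using assms nth_eq_iff_index_eq by auto
    then show "Poly_Mapping.lookup (Poly_Mapping.single (cs ! j) (a j)) (cs ! k) = (if j = k then a j else 0)"
      by (simp add: lookup_single when_def)
  qed
  also have "\<dots> = a k" using assms(2) by simp
  finally show ?thesis .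
qed

lemma lookup_sum_single_notin:
  assumes "t \<notin> set cs"
  shows "Poly_Mapping.lookup (\<Sum>j<length cs. Poly_Mapping.single (cs ! j) (a j)) t = 0"
  unfolding lookup_sum
  by (rule sum.neutral) (use assms in \<open>auto simp: lookup_single when_def\<close>)

lemma poly_eq_on_cols:
  fixes p q :: "'a::zero mpoly"
  assumes "Poly_Mapping.keys p \<subseteq> set cs" "Poly_Mapping.keys q \<subseteq> set cs"
    and "\<And>k. k < length cs \<Longrightarrow> Poly_Mapping.lookup p (cs ! k) = Poly_Mapping.lookup q (cs ! k)"
  shows "p = q"
proof (rule poly_mapping_eqI)
  fix t
  show "Poly_Mapping.lookup p t = Poly_Mapping.lookup q t"
  proof (cases "t \<in> set cs")
    case True
    then obtain k where "k < length cs" "t = cs ! k" by (auto simp: in_set_conv_nth)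
    then show ?thesis using assms(3) by simp
  next
    case False
    then have "t \<notin> Poly_Mapping.keys p" "t \<notin> Poly_Mapping.keys q" using assms(1,2) by blast+
    then show ?thesis by (simp add: in_keys_iff)
  qed
qed

lemma ts_eq:
  assumes "finite T"
  shows "(THE ts. sorted_wrt lex_gt ts \<and> set ts = T) = rev (sorted_list_of_set T)"
proof (rule the_equality)
  show "sorted_wrt lex_gt (rev (sorted_list_of_set T)) \<and> set (rev (sorted_list_of_set T)) = T"
    using assms by (simp add: sorted_wrt_rev lex_gt_iff[abs_def] strict_sorted_list_of_set)
next
  fix ts assume a: "sorted_wrt lex_gt ts \<and> set ts = T"
  then have "sorted_wrt (<) (rev ts)" by (simp add: sorted_wrt_rev lex_gt_iff[abs_def])
  moreover have "sorted_wrt (<) (sorted_list_of_set T)" by (simp add: strict_sorted_list_of_set)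
  moreover have "set (rev ts) = set (sorted_list_of_set T)" using a assms by simp
  ultimately have "rev ts = sorted_list_of_set T" by (metis strict_sorted_equal)
  then show "ts = rev (sorted_list_of_set T)" by (metis rev_rev_ident)
qed

lemma var_term_inj: "var_term z = var_term z' \<longleftrightarrow> z = z'"
  unfolding var_term_def by (metis lookup_single_eq lookup_single_not_eq one_neq_zero)

definition phi :: "pterm list \<Rightarrow> 'a::field vec \<Rightarrow> 'a mpoly" where
  "phi cs v = (\<Sum>j<length cs. Poly_Mapping.single (cs ! j) (v $ j))"

lemma keys_phi: "Poly_Mapping.keys (phi cs v) \<subseteq> set cs"
  using lookup_sum_single_notin[of _ cs] unfolding phi_def by (auto simp: in_keys_iff)

lemma lookup_phi: "distinct cs \<Longrightarrow> k < length cs \<Longrightarrow> Poly_Mapping.lookup (phi cs v) (cs ! k) = v $ k"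
  unfolding phi_def by (rule lookup_sum_single_nth)

lemma phi_zero: "phi cs (0\<^sub>v (length cs)) = 0"
  unfolding phi_def by (rule sum.neutral) simp

lemma lookup_sum_pscale:
  "Poly_Mapping.lookup (\<Sum>k<m. pscale (c k) (p k)) t = (\<Sum>k<m. c k * Poly_Mapping.lookup (p k) t)"
  by (simp add: lookup_sum)

lemma keys_sum_pscale:
  "Poly_Mapping.keys (\<Sum>k<m. pscale (c k) (p k :: 'a::field mpoly)) \<subseteq> (\<Union>k<m. Poly_Mapping.keys (p k))"
proof
  fix t assume "t \<in> Poly_Mapping.keys (\<Sum>k<m. pscale (c k) (p k))"
  then have "(\<Sum>k<m. c k * Poly_Mapping.lookup (p k) t) \<noteq> 0" by (simp add: in_keys_iff lookup_sum_pscale)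
  then obtain k where "k < m" "c k * Poly_Mapping.lookup (p k) t \<noteq> 0" by (meson lessThan_iff sum.neutral)
  then show "t \<in> (\<Union>k<m. Poly_Mapping.keys (p k))" by (auto simp: in_keys_iff)
qed

lemma LI_props:
  fixes gs :: "'a::field mpoly list"
  assumes dz: "distinct zs"
  shows "set (LI zs gs) \<subseteq> Kspan (set gs)"
    and "set gs \<subseteq> Kspan (set (LI zs gs))"
    and "\<forall>p\<in>set (LI zs gs). \<exists>t. Poly_Mapping.lookup p t = 1 \<and>
            (\<forall>p'\<in>set (LI zs gs). p' \<noteq> p \<longrightarrow> Poly_Mapping.lookup p' t = 0)"
proof -
  define T where "T = (\<Union>g\<in>set gs. Poly_Mapping.keys g) - var_term ` set zs"
  define ts where "ts = (THE ts. sorted_wrt lex_gt ts \<and> set ts = T)"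
  define cols where "cols = map var_term zs @ ts"
  define M where "M = mat (length gs) (length cols) (\<lambda>(i, j). Poly_Mapping.lookup (gs ! i) (cols ! j))"
  define R where "R = gauss_jordan_single M"
  define m where "m = length gs"
  define nc where "nc = length cols"
  have LI_eq: "LI zs gs = map (phi cols) (filter (\<lambda>v. v \<noteq> 0\<^sub>v nc) (map (row R) [0..<dim_row R]))"
    unfolding LI_def Let_def T_def[symmetric] ts_def[symmetric] cols_def[symmetric]
      phi_def[abs_def] R_def M_def nc_def by simp
  have finT: "finite T" unfolding T_def by simp
  have ts: "ts = rev (sorted_list_of_set T)" unfolding ts_def using finT by (rule ts_eq)
  have dcols: "distinct cols"
    unfolding cols_def ts using finT dz
    by (auto simp: distinct_map inj_on_def var_term_inj T_def)
  have keys_gs: "Poly_Mapping.keys (gs ! k) \<subseteq> set cols" if "k < m" for k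
    using that unfolding cols_def ts m_def T_def using finT
    by (auto simp: T_def)
  have Mc: "M \<in> carrier_mat m nc" unfolding M_def m_def nc_def by simp
  have M_idx: "M $$ (k, j) = Poly_Mapping.lookup (gs ! k) (cols ! j)" if "k < m" "j < nc" for k j
    using that unfolding M_def m_def nc_def by simp
  have Rc: "R \<in> carrier_mat m nc" and ref: "row_echelon_form R"
    and "\<exists>P Q. R = P * M \<and> P \<in> carrier_mat m m \<and> Q \<in> carrier_mat m m \<and> P * Q = 1\<^sub>m m \<and> Q * P = 1\<^sub>m m"
    using gauss_jordan_single[OF Mc R_def[symmetric]] by blast+
  then obtain P Q where PQ: "R = P * M" "P \<in> carrier_mat m m" "Q \<in> carrier_mat m m" "Q * P = 1\<^sub>m m"
    by blast
  have QR: "Q * R = M"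
  proof -
    have "Q * R = Q * (P * M)" using PQ(1) by simp
    also have "\<dots> = (Q * P) * M" using assoc_mult_mat[OF PQ(3) PQ(2) Mc] by simp
    also have "\<dots> = M" using PQ(4) Mc by (simp add: left_mult_one_mat)
    finally show ?thesis .
  qed
  define q where "q i = phi cols (row R i)" for i
  have q_idx: "Poly_Mapping.lookup (q i) (cols ! j) = R $$ (i, j)" if "i < m" "j < nc" for i j
    unfolding q_def using that Rc dcols by (simp add: lookup_phi nc_def)
  have q_eq: "q i = (\<Sum>k<m. pscale (P $$ (i, k)) (gs ! k))" if "i < m" for i
  proof (rule poly_eq_on_cols[of _ cols])
    show "Poly_Mapping.keys (q i) \<subseteq> set cols" unfolding q_def by (rule keys_phi)
    show "Poly_Mapping.keys (\<Sum>k<m. pscale (P $$ (i, k)) (gs ! k)) \<subseteq> set cols"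
      using keys_sum_pscale[of "\<lambda>k. P $$ (i, k)" "\<lambda>k. gs ! k" m] keys_gs by blast
    fix j assume j: "j < length cols"
    have "R $$ (i, j) = (\<Sum>k<m. P $$ (i, k) * M $$ (k, j))"
      using that j PQ Mc unfolding nc_def
      by (simp add: scalar_prod_def lessThan_atLeast0)
    also have "\<dots> = (\<Sum>k<m. P $$ (i, k) * Poly_Mapping.lookup (gs ! k) (cols ! j))"
      using j M_idx unfolding nc_def by simp
    finally show "Poly_Mapping.lookup (q i) (cols ! j) = Poly_Mapping.lookup (\<Sum>k<m. pscale (P $$ (i, k)) (gs ! k)) (cols ! j)"
      using q_idx[OF that, of j] j unfolding nc_def lookup_sum_pscale by simp
  qed
  have g_eq: "gs ! k = (\<Sum>i<m. pscale (Q $$ (k, i)) (q i))" if "k < m" for k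
  proof (rule poly_eq_on_cols[of _ cols])
    show "Poly_Mapping.keys (gs ! k) \<subseteq> set cols" using keys_gs[OF that] .
    show "Poly_Mapping.keys (\<Sum>i<m. pscale (Q $$ (k, i)) (q i)) \<subseteq> set cols"
      using keys_sum_pscale[of "\<lambda>i. Q $$ (k, i)" q m] keys_phi unfolding q_def by blast
    fix j assume j: "j < length cols"
    have "M $$ (k, j) = (\<Sum>i<m. Q $$ (k, i) * R $$ (i, j))"
      using that j PQ Rc unfolding QR[symmetric] nc_def
      by (simp add: scalar_prod_def lessThan_atLeast0)
    also have "\<dots> = (\<Sum>i<m. Q $$ (k, i) * Poly_Mapping.lookup (q i) (cols ! j))"
      using j q_idx unfolding nc_def by simp
    finally show "Poly_Mapping.lookup (gs ! k) (cols ! j) = Poly_Mapping.lookup (\<Sum>i<m. pscale (Q $$ (k, i)) (q i)) (cols ! j)"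
      using M_idx[OF that, of j] j unfolding nc_def lookup_sum_pscale by simp
  qed
  have setLI: "set (LI zs gs) = q ` {i. i < m \<and> row R i \<noteq> 0\<^sub>v nc}"
    unfolding LI_eq q_def using Rc by auto
  show "set (LI zs gs) \<subseteq> Kspan (set gs)"
  proof
    fix p assume "p \<in> set (LI zs gs)"
    then obtain i where i: "i < m" "p = q i" unfolding setLI by blast
    have "(\<Sum>k<m. pscale (P $$ (i, k)) (gs ! k)) \<in> Kspan (set gs)"
      by (rule PV.span_sum, rule PV.span_scale, rule PV.span_base) (simp add: m_def)
    then show "p \<in> Kspan (set gs)" using q_eq[OF i(1)] i(2) by simp
  qed
  show "set gs \<subseteq> Kspan (set (LI zs gs))"
  proof
    fix g assume "g \<in> set gs"
    then obtain k where k: "k < m" "g = gs ! k" unfolding m_def by (auto simp: in_set_conv_nth)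
    have "(\<Sum>i<m. pscale (Q $$ (k, i)) (q i)) \<in> Kspan (set (LI zs gs))"
    proof (rule PV.span_sum, rule PV.span_scale)
      fix i assume "i \<in> {..<m}"
      show "q i \<in> Kspan (set (LI zs gs))"
      proof (cases "row R i = 0\<^sub>v nc")
        case True
        then have "q i = 0" unfolding q_def nc_def by (simp add: phi_zero)
        then show ?thesis by (simp add: PV.span_zero)
      next
        case False
        then have "q i \<in> set (LI zs gs)" unfolding setLI using \<open>i \<in> {..<m}\<close> by blast
        then show ?thesis by (rule PV.span_base)
      qed
    qed
    then show "g \<in> Kspan (set (LI zs gs))" using g_eq[OF k(1)] k(2) by simp
  qed
  obtain f where pf: "pivot_fun R f nc"
    using ref Rc unfolding row_echelon_form_def by auto
  have dR: "dim_row R = m" using Rc by simp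
  show "\<forall>p\<in>set (LI zs gs). \<exists>t. Poly_Mapping.lookup p t = 1 \<and>
            (\<forall>p'\<in>set (LI zs gs). p' \<noteq> p \<longrightarrow> Poly_Mapping.lookup p' t = 0)"
  proof
    fix p assume "p \<in> set (LI zs gs)"
    then obtain i where i: "i < m" "row R i \<noteq> 0\<^sub>v nc" "p = q i" unfolding setLI by blast
    have fi: "f i < nc"
      using pivot_fun_zero_row_iff[OF pf Rc i(1)] pivot_funD(1)[OF dR pf i(1)] i(2) by auto
    have "Poly_Mapping.lookup p (cols ! f i) = 1"
      using i q_idx[OF i(1) fi] pivot_funD(4)[OF dR pf i(1) fi] by simp
    moreover have "Poly_Mapping.lookup p' (cols ! f i) = 0" if "p' \<in> set (LI zs gs)" "p' \<noteq> p" for p'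
    proof -
      from that obtain i' where i': "i' < m" "p' = q i'" unfolding setLI by blast
      then have "i' \<noteq> i" using that i by blast
      then show ?thesis using i' q_idx[OF i'(1) fi] pivot_funD(5)[OF dR pf i(1) fi i'(1)] by simp
    qed
    ultimately show "\<exists>t. Poly_Mapping.lookup p t = 1 \<and>
            (\<forall>p'\<in>set (LI zs gs). p' \<noteq> p \<longrightarrow> Poly_Mapping.lookup p' t = 0)" by blast
  qed
qed

lemma LI_span:
  fixes gs :: "'a::field mpoly list"
  assumes "distinct zs"
  shows "Kspan (set (LI zs gs)) = Kspan (set gs)"
proof
  show "Kspan (set (LI zs gs)) \<subseteq> Kspan (set gs)"
    using LI_props(1)[OF assms, of gs] by (rule PV.span_minimal) (rule PV.subspace_span)
  show "Kspan (set gs) \<subseteq> Kspan (set (LI zs gs))"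
    using LI_props(2)[OF assms, of gs] by (rule PV.span_minimal) (rule PV.subspace_span)
qed

lemma pivot_single:
  fixes L :: "'a::field mpoly set"
  assumes fin: "finite L"
    and piv: "\<And>p. p \<in> L \<Longrightarrow> Poly_Mapping.lookup p (\<pi> p) = 1"
    and piv0: "\<And>p p'. p \<in> L \<Longrightarrow> p' \<in> L \<Longrightarrow> p' \<noteq> p \<Longrightarrow> Poly_Mapping.lookup p' (\<pi> p) = 0"
    and v: "Poly_Mapping.single s 1 \<in> Kspan L"
  shows "Poly_Mapping.single s 1 \<in> L"
proof -
  let ?v = "Poly_Mapping.single s (1::'a)"
  obtain u where u: "?v = (\<Sum>p\<in>L. pscale (u p) p)"
    using v unfolding PV.span_finite[OF fin] by blast
  have coef: "u p = Poly_Mapping.lookup ?v (\<pi> p)" if "p \<in> L" for p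
  proof -
    have "Poly_Mapping.lookup ?v (\<pi> p) = (\<Sum>p'\<in>L. u p' * Poly_Mapping.lookup p' (\<pi> p))"
      unfolding u by (simp add: lookup_sum)
    also have "\<dots> = (\<Sum>p'\<in>L. if p' = p then u p' else 0)"
      by (rule sum.cong[OF refl]) (use that piv piv0 in auto)
    also have "\<dots> = u p" using that fin by simp
    finally show ?thesis by simp
  qed
  show ?thesis
  proof (rule ccontr)
    assume nin: "?v \<notin> L"
    have "u p = 0" if "p \<in> L" for p
    proof -
      have "\<pi> p \<noteq> s"
      proof
        assume ps: "\<pi> p = s"
        have "?v \<noteq> p" using nin that by blast
        have "?v = p"
        proof -
          have "u p' = 0" if "p' \<in> L" "p' \<noteq> p" for p'
          proof -
            have a: "Poly_Mapping.lookup p (\<pi> p') = 0"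
              using piv0[OF that(1) \<open>p \<in> L\<close>] that(2) by metis
            have b: "Poly_Mapping.lookup p (\<pi> p) = 1" using piv[OF \<open>p \<in> L\<close>] .
            have "\<pi> p' \<noteq> s" using a b ps by auto
            then show ?thesis using coef[OF that(1)] by (simp add: lookup_single when_def)
          qed
          then have "?v = (\<Sum>p'\<in>L. if p' = p then pscale (u p') p' else 0)"
            unfolding u by (intro sum.cong refl) auto
          also have "\<dots> = pscale (u p) p" using \<open>p \<in> L\<close> fin by simp
          also have "u p = 1" using coef[OF \<open>p \<in> L\<close>] ps by simp
          finally show ?thesis by (simp add: PV.scale_one)
        qed
        with \<open>?v \<noteq> p\<close> show False by blast
      qed
      then show ?thesis using coef[OF that] by (simp add: lookup_single when_def)
    qed
    then have "?v = 0" unfolding u by simp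
    then have "Poly_Mapping.lookup ?v s = 0" by simp
    then show False by simp
  qed
qed

lemma LI_var:
  fixes gs :: "'a::field mpoly list"
  assumes "distinct zs" "var z \<in> Kspan (set gs)"
  shows "var z \<in> set (LI zs gs)"
proof -
  let ?L = "set (LI zs gs)"
  have "\<forall>p\<in>?L. \<exists>t. Poly_Mapping.lookup p t = 1 \<and> (\<forall>p'\<in>?L. p' \<noteq> p \<longrightarrow> Poly_Mapping.lookup p' t = 0)"
    by (rule LI_props(3)[OF assms(1)])
  then obtain \<pi> where \<pi>: "\<forall>p\<in>?L. Poly_Mapping.lookup p (\<pi> p) = 1 \<and> (\<forall>p'\<in>?L. p' \<noteq> p \<longrightarrow> Poly_Mapping.lookup p' (\<pi> p) = 0)"
    by metis
  have "var z \<in> Kspan ?L" using assms LI_span by blast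
  then show ?thesis unfolding var_def
    by (intro pivot_single[of ?L \<pi>]) (use \<pi> in auto)
qed

lemma is_term_var: "z < n \<Longrightarrow> is_term n (var_term z)"
  unfolding is_term_def var_term_def by simp

lemma lookup_var_term: "Poly_Mapping.lookup (var_term z) i = (if i = z then 1 else 0)"
  unfolding var_term_def by (simp add: lookup_single when_def)

lemma divides_ge:
  assumes TO: "term_ordering n tle" and t: "is_term n t" and z: "z < n"
    and pos: "0 < Poly_Mapping.lookup t z"
  shows "tle (var_term z) t"
proof -
  define u where "u = t - var_term z"
  have tu: "u + var_term z = t"
    by (rule poly_mapping_eqI) (use pos in \<open>simp add: u_def lookup_add lookup_minus lookup_var_term\<close>)
  have "Poly_Mapping.keys u \<subseteq> Poly_Mapping.keys t"
    by (auto simp: u_def in_keys_iff lookup_minus lookup_var_term split: if_splits)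
  then have ut: "is_term n u" using t unfolding is_term_def by blast
  have z0: "is_term n 0" unfolding is_term_def by simp
  have "tle 0 u" by (rule TO_zero[OF TO ut])
  then have "tle (0 + var_term z) (u + var_term z)"
    by (rule TO_mult[OF TO z0 ut is_term_var[OF z]])
  then show ?thesis using tu by simp
qed

lemma Bmin:
  fixes G :: "'a::field mpoly set"
  assumes TO: "term_ordering n tle"
    and hyp: "\<forall>z\<in>set zs0. \<exists>f\<in>Kspan G. var_term z \<in> Poly_Mapping.keys f \<and>
                 (\<forall>s\<in>Poly_Mapping.keys f. tle s (var_term z))"
    and terms: "\<forall>f\<in>Kspan G. in_P n f" and zs0n: "set zs0 \<subseteq> {..<n}"
    and zc: "set zc \<subseteq> set zs0" "zc \<noteq> []"
  shows "\<exists>z\<in>set zc. var z \<in> del_nondiv zc ` Kspan G"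
proof -
  have vt: "is_term n (var_term z)" if "z \<in> set zc" for z
    using that zc zs0n is_term_var by blast
  obtain z where z: "z \<in> set zc" "\<forall>z'\<in>set zc. tle (var_term z) (var_term z')"
  proof -
    have "\<exists>m\<in>set zc. \<forall>s\<in>set zc. (\<lambda>a b. tle (var_term b) (var_term a)) s m"
    proof (rule finite_max)
      show "finite (set zc)" by simp
      show "set zc \<noteq> {}" using zc by simp
      show "tle (var_term y) (var_term x) \<or> tle (var_term x) (var_term y)" if "x \<in> set zc" "y \<in> set zc" for x y
        using TO_total[OF TO vt[OF that(2)] vt[OF that(1)]] .
      show "tle (var_term z) (var_term x)" if "x \<in> set zc" "y \<in> set zc" "z \<in> set zc"
        "tle (var_term y) (var_term x)" "tle (var_term z) (var_term y)" for x y z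
        using TO_trans[OF TO vt[OF that(3)] vt[OF that(2)] vt[OF that(1)] that(5) that(4)] .
      show "tle (var_term x) (var_term x)" if "x \<in> set zc" for x
        using TO_refl[OF TO vt[OF that]] .
    qed
    then show ?thesis using that by blast
  qed
  have zn: "z < n" using z(1) zc zs0n by blast
  obtain f where f: "f \<in> Kspan G" "var_term z \<in> Poly_Mapping.keys f"
    "\<forall>s\<in>Poly_Mapping.keys f. tle s (var_term z)"
    using hyp z(1) zc by blast
  have fP: "in_P n f" using terms f(1) by blast
  define c where "c = Poly_Mapping.lookup f (var_term z)"
  have c0: "c \<noteq> 0" using f(2) unfolding c_def by (simp add: in_keys_iff)
  have key: "t = var_term z" if "t \<in> Poly_Mapping.keys f" "D zc t" for t
  proof -
    from that(2) obtain z' where z': "z' \<in> set zc" "0 < Poly_Mapping.lookup t z'" unfolding D_def by blast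
    have tt: "is_term n t" using fP that(1) unfolding in_P_def by blast
    have z'n: "z' < n" using z'(1) zc zs0n by blast
    have "tle (var_term z') t" by (rule divides_ge[OF TO tt z'n z'(2)])
    moreover have "tle (var_term z) (var_term z')" using z(2) z'(1) by blast
    ultimately have "tle (var_term z) t" using TO_trans[OF TO vt[OF z(1)] vt[OF z'(1)] tt] by blast
    moreover have "tle t (var_term z)" using f(3) that(1) by blast
    ultimately show ?thesis using TO_antisym[OF TO tt vt[OF z(1)]] by blast
  qed
  have Dz: "D zc (var_term z)" unfolding D_def using z(1) by (auto simp: lookup_var_term)
  have eq: "del_nondiv zc f = pscale c (var z)"
  proof (rule poly_mapping_eqI)
    fix t
    show "Poly_Mapping.lookup (del_nondiv zc f) t = Poly_Mapping.lookup (pscale c (var z)) t"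
    proof (cases "t = var_term z")
      case True
      then show ?thesis using Dz by (simp add: lookup_del_nondiv c_def var_def)
    next
      case False
      then have "Poly_Mapping.lookup (del_nondiv zc f) t = 0"
        using key[of t] by (auto simp: lookup_del_nondiv in_keys_iff)
      then show ?thesis using False by (simp add: var_def lookup_single when_def)
    qed
  qed
  have lin: "module_hom pscale pscale (del_nondiv zc :: 'a mpoly \<Rightarrow> _)" by (rule del_nondiv_linear)
  have "del_nondiv zc (pscale (inverse c) f) = pscale (inverse c) (del_nondiv zc f)"
    using module_hom.scale[OF lin] by blast
  also have "\<dots> = var z" using c0 by (simp add: eq PV.scale_scale)
  finally have "var z = del_nondiv zc (pscale (inverse c) f)" by simp
  moreover have "pscale (inverse c) f \<in> Kspan G" using f(1) by (rule PV.span_scale)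
  ultimately show ?thesis using z(1) by blast
qed

lemma loop_ok:
  fixes G :: "'a::field mpoly set"
  assumes TO: "term_ordering n tle"
    and hyp: "\<forall>z\<in>set zs0. \<exists>f\<in>Kspan G. var_term z \<in> Poly_Mapping.keys f \<and>
                 (\<forall>s\<in>Poly_Mapping.keys f. tle s (var_term z))"
    and terms: "\<forall>f\<in>Kspan G. in_P n f" and zs0n: "set zs0 \<subseteq> {..<n}"
  shows "set zs \<subseteq> set zs0 \<Longrightarrow> distinct zs \<Longrightarrow> zs \<noteq> [] \<Longrightarrow>
    Kspan (set gs) = del_nondiv zs ` Kspan G \<Longrightarrow> check_loop \<delta> d zs gs w \<noteq> None"
proof (induction \<delta> d zs gs w rule: check_loop.induct)
  case (1 \<delta> d zs gs w)
  define gs1 where "gs1 = LI zs gs"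
  define zt where "zt = filter (\<lambda>z. var z \<in> set gs1) zs"
  define w' where "w' = (\<lambda>k. if k \<in> set zt then d else w k)"
  define zs' where "zs' = filter (\<lambda>z. z \<notin> set zt) zs"
  define gs2 where "gs2 = map (del_nondiv zs') gs1"
  obtain z where z: "z \<in> set zs" "var z \<in> del_nondiv zs ` Kspan G"
    using Bmin[OF TO hyp terms zs0n "1.prems"(1,3)] by blast
  have sp1: "Kspan (set gs1) = Kspan (set gs)" unfolding gs1_def by (rule LI_span[OF "1.prems"(2)])
  have "var z \<in> Kspan (set gs)"
    unfolding "1.prems"(4) using z(2) .
  then have "var z \<in> set gs1" unfolding gs1_def by (rule LI_var[OF "1.prems"(2)])
  then have "z \<in> set zt" unfolding zt_def using z(1) by simp
  then have ztne: "zt \<noteq> []" by auto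
  have unf: "check_loop \<delta> d zs gs w = (if zs' = [] then Some w' else check_loop \<delta> (\<delta> * d + 1) zs' gs2 w')"
    using ztne unfolding gs1_def zt_def w'_def zs'_def gs2_def
    by (subst check_loop.simps) (simp add: Let_def)
  show ?case
  proof (cases "zs' = []")
    case True then show ?thesis using unf by simp
  next
    case False
    have sub: "set zs' \<subseteq> set zs" unfolding zs'_def by auto
    have "Kspan (set gs2) = del_nondiv zs' ` Kspan (set gs1)"
      unfolding gs2_def set_map by (rule span_image_lin[OF del_nondiv_linear])
    also have "\<dots> = del_nondiv zs' ` del_nondiv zs ` Kspan G"
      unfolding sp1 "1.prems"(4) ..
    also have "\<dots> = del_nondiv zs' ` Kspan G"
      by (simp add: image_image del_nondiv_comp[OF sub])
    finally have sp: "Kspan (set gs2) = del_nondiv zs' ` Kspan G" .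
    have "check_loop \<delta> (\<delta> * d + 1) zs' gs2 w' \<noteq> None"
    proof (rule "1.IH"[OF gs1_def zt_def ztne w'_def zs'_def gs2_def False])
      show "set zs' \<subseteq> set zs0" using sub "1.prems"(1) by blast
      show "distinct zs'" using "1.prems"(2) unfolding zs'_def by simp
      show "zs' \<noteq> []" by fact
      show "Kspan (set gs2) = del_nondiv zs' ` Kspan G" by fact
    qed
    then show ?thesis using unf False by simp
  qed
qed

lemma lookup_Lin: "Poly_Mapping.lookup (Lin f) t = (if tdeg t = 1 then Poly_Mapping.lookup f t else 0)"
  unfolding Lin_def by (simp add: lookup_restrict_terms)

lemma tdeg_var: "tdeg (var_term z) = 1"
  unfolding tdeg_def var_term_def by simp

lemma kdim_ok:
  fixes gs :: "'a::field mpoly list"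
  assumes TO: "term_ordering n tle"
    and hyp: "\<forall>z\<in>set zs. \<exists>f\<in>Kspan (set gs). var_term z \<in> Poly_Mapping.keys f \<and>
                 (\<forall>s\<in>Poly_Mapping.keys f. tle s (var_term z))"
    and zsn: "set zs \<subseteq> {..<n}" and dz: "distinct zs"
  shows "length zs \<le> Kdim (Lin ` set (map (del_nondiv zs) gs))"
proof -
  have vt: "is_term n (var_term z)" if "z \<in> set zs" for z
    using that zsn is_term_var by blast
  obtain F where F: "\<And>z. z \<in> set zs \<Longrightarrow> F z \<in> Kspan (set gs) \<and> var_term z \<in> Poly_Mapping.keys (F z) \<and>
                 (\<forall>s\<in>Poly_Mapping.keys (F z). tle s (var_term z))"
    using hyp by metis
  define q where "q z = Lin (del_nondiv zs (F z))" for z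
  define X where "X = Lin ` set (map (del_nondiv zs) gs)"
  have linL: "module_hom pscale pscale (Lin :: 'a mpoly \<Rightarrow> _)" by (rule Lin_linear)
  have linD: "module_hom pscale pscale (del_nondiv zs :: 'a mpoly \<Rightarrow> _)" by (rule del_nondiv_linear)
  have spanX: "Kspan X = Lin ` del_nondiv zs ` Kspan (set gs)"
    unfolding X_def set_map span_image_lin[OF linL] span_image_lin[OF linD] ..
  have qX: "q z \<in> Kspan X" if "z \<in> set zs" for z
    unfolding spanX q_def using F[OF that] by blast
  have lq: "Poly_Mapping.lookup (q z) t = (if tdeg t = 1 \<and> D zs t then Poly_Mapping.lookup (F z) t else 0)" for z t
    unfolding q_def by (simp add: lookup_Lin lookup_del_nondiv)
  have Dv: "D zs (var_term z)" if "z \<in> set zs" for z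
    unfolding D_def using that by (auto simp: lookup_var_term)
  have qv: "Poly_Mapping.lookup (q z) (var_term z) \<noteq> 0" if "z \<in> set zs" for z
    using F[OF that] Dv[OF that] by (simp add: lq tdeg_var in_keys_iff)
  have kq: "Poly_Mapping.keys (q z) \<subseteq> Poly_Mapping.keys (F z)" for z
    by (auto simp: in_keys_iff lq split: if_splits)
  have ord: "tle (var_term z) (var_term z')"
    if "z \<in> set zs" "z' \<in> set zs" "Poly_Mapping.lookup (q z') (var_term z) \<noteq> 0" for z z'
  proof -
    have "var_term z \<in> Poly_Mapping.keys (F z')" using that(3) kq[of z'] by (auto simp: in_keys_iff)
    then show ?thesis using F[OF that(2)] by blast
  qed
  have inj: "inj_on q (set zs)"
  proof (rule inj_onI)
    fix z z' assume a: "z \<in> set zs" "z' \<in> set zs" "q z = q z'"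
    have "tle (var_term z) (var_term z')" using ord[OF a(1,2)] qv[OF a(1)] a(3) by simp
    moreover have "tle (var_term z') (var_term z)" using ord[OF a(2,1)] qv[OF a(2)] a(3) by simp
    ultimately have "var_term z = var_term z'" using TO_antisym[OF TO vt[OF a(1)] vt[OF a(2)]] by blast
    then show "z = z'" by (simp add: var_term_inj)
  qed
  define B where "B = q ` set zs"
  have cardB: "card B = length zs" unfolding B_def using card_image[OF inj] dz by (simp add: distinct_card)
  have finB: "finite B" unfolding B_def by simp
  have indep: "PV.independent B"
  proof
    assume "PV.dependent B"
    then obtain c where c: "\<exists>v\<in>B. c v \<noteq> 0" and sum0: "(\<Sum>v\<in>B. pscale (c v) v) = 0"
      unfolding PV.dependent_finite[OF finB] by blast
    have sum0': "(\<Sum>z\<in>set zs. pscale (c (q z)) (q z)) = 0"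
      using sum0 unfolding B_def sum.reindex[OF inj] by (simp add: comp_def)
    show False
    proof -
      define S where "S = {z\<in>set zs. c (q z) \<noteq> 0}"
      have Sne: "S \<noteq> {}" using c unfolding S_def B_def by blast
      obtain z where z: "z \<in> S" "\<forall>z'\<in>S. tle (var_term z') (var_term z)"
      proof -
        have "\<exists>m\<in>S. \<forall>s\<in>S. (\<lambda>a b. tle (var_term a) (var_term b)) s m"
        proof (rule finite_max)
          show "finite S" unfolding S_def by simp
          show "S \<noteq> {}" by fact
          show "tle (var_term x) (var_term y) \<or> tle (var_term y) (var_term x)" if "x \<in> S" "y \<in> S" for x y
            using that unfolding S_def using TO_total[OF TO vt vt] by blast
          show "tle (var_term x) (var_term z)" if "x \<in> S" "y \<in> S" "z \<in> S"
            "tle (var_term x) (var_term y)" "tle (var_term y) (var_term z)" for x y z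
            using that(1-3) unfolding S_def using TO_trans[OF TO vt vt vt that(4,5)] by blast
          show "tle (var_term x) (var_term x)" if "x \<in> S" for x
            using that unfolding S_def using TO_refl[OF TO vt] by blast
        qed
        then show ?thesis using that by blast
      qed
      have zz: "z \<in> set zs" "c (q z) \<noteq> 0" using z(1) unfolding S_def by auto
      have "0 = Poly_Mapping.lookup (\<Sum>z'\<in>set zs. pscale (c (q z')) (q z')) (var_term z)"
        using sum0' by simp
      also have "\<dots> = (\<Sum>z'\<in>set zs. c (q z') * Poly_Mapping.lookup (q z') (var_term z))"
        by (simp add: lookup_sum)
      also have "\<dots> = (\<Sum>z'\<in>set zs. if z' = z then c (q z') * Poly_Mapping.lookup (q z') (var_term z) else 0)"
      proof (rule sum.cong[OF refl])
        fix z' assume z': "z' \<in> set zs"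
        show "c (q z') * Poly_Mapping.lookup (q z') (var_term z) =
          (if z' = z then c (q z') * Poly_Mapping.lookup (q z') (var_term z) else 0)"
        proof (cases "z' = z")
          case False
          show ?thesis
          proof (cases "c (q z') = 0")
            case False2: False
            then have "z' \<in> S" using z' unfolding S_def by blast
            then have t1: "tle (var_term z') (var_term z)" using z(2) by blast
            have "Poly_Mapping.lookup (q z') (var_term z) = 0"
            proof (rule ccontr)
              assume "Poly_Mapping.lookup (q z') (var_term z) \<noteq> 0"
              then have "tle (var_term z) (var_term z')" using ord[OF zz(1) z'] by blast
              then have "var_term z' = var_term z" using TO_antisym[OF TO vt[OF z'] vt[OF zz(1)] t1] by blast
              then show False using \<open>z' \<noteq> z\<close> by (simp add: var_term_inj)
            qed
            then show ?thesis using \<open>z' \<noteq> z\<close> by simp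
          qed (use \<open>z' \<noteq> z\<close> in simp)
        qed simp
      qed
      also have "\<dots> = c (q z) * Poly_Mapping.lookup (q z) (var_term z)"
        using zz(1) by simp
      finally show False using zz(2) qv[OF zz(1)] by simp
    qed
  qed
  obtain A where A: "A \<subseteq> X" "PV.independent A" "X \<subseteq> Kspan A" "card A = Kdim X"
    by (rule PV.basis_exists)
  have finX: "finite X" unfolding X_def by simp
  have finA: "finite A" using A(1) finX by (rule finite_subset)
  have "Kspan X \<subseteq> Kspan A" using A(3) by (rule PV.span_minimal) (rule PV.subspace_span)
  moreover have "B \<subseteq> Kspan X" unfolding B_def using qX by blast
  ultimately have "B \<subseteq> Kspan A" by blast
  then have "card B \<le> card A" using PV.independent_span_bound[OF finA indep] by blast
  then show ?thesis using cardB A(4) unfolding X_def by simp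
qed

lemma loop_some:
  fixes G :: "'a::field mpoly set"
  assumes deg: "\<forall>f\<in>Kspan G. \<forall>t\<in>Poly_Mapping.keys f. tdeg t \<le> \<delta>"
  shows "check_loop \<delta> d zs gs w = Some W \<Longrightarrow> distinct zs \<Longrightarrow>
    Kspan (set gs) \<subseteq> del_nondiv zs ` Kspan G \<Longrightarrow> (\<forall>i. w i \<le> M) \<Longrightarrow> M * \<delta> < d \<Longrightarrow>
    (\<forall>k. k \<notin> set zs \<longrightarrow> W k = w k) \<and>
    (\<forall>z\<in>set zs. \<exists>f\<in>Kspan G. var_term z \<in> Poly_Mapping.keys f \<and>
        (\<forall>t\<in>Poly_Mapping.keys f. t \<noteq> var_term z \<longrightarrow> wt W t < W z))"
proof (induction \<delta>' \<equiv> \<delta> d zs gs w arbitrary: M W rule: check_loop.induct)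
  case (1 d zs gs w)
  define gs1 where "gs1 = LI zs gs"
  define zt where "zt = filter (\<lambda>z. var z \<in> set gs1) zs"
  define w' where "w' = (\<lambda>k. if k \<in> set zt then d else w k)"
  define zs' where "zs' = filter (\<lambda>z. z \<notin> set zt) zs"
  define gs2 where "gs2 = map (del_nondiv zs') gs1"
  have ztne: "zt \<noteq> []"
  proof
    assume "zt = []"
    then have "check_loop \<delta> d zs gs w = None" unfolding gs1_def zt_def
      by (subst check_loop.simps) (simp add: Let_def)
    then show False using "1.prems"(1) by simp
  qed
  have unf: "check_loop \<delta> d zs gs w = (if zs' = [] then Some w' else check_loop \<delta> (\<delta> * d + 1) zs' gs2 w')"
    using ztne unfolding gs1_def zt_def w'_def zs'_def gs2_def
    by (subst check_loop.simps) (simp add: Let_def)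
  have sp1: "Kspan (set gs1) = Kspan (set gs)" unfolding gs1_def by (rule LI_span[OF "1.prems"(2)])
  have direct: "\<exists>f\<in>Kspan G. var_term z \<in> Poly_Mapping.keys f \<and>
        (\<forall>t\<in>Poly_Mapping.keys f. t \<noteq> var_term z \<longrightarrow> wt W' t < W' z)"
    if z: "z \<in> set zt" and WW: "\<forall>k. k \<notin> set zs' \<longrightarrow> W' k = w' k" for z W'
  proof -
    have zzs: "z \<in> set zs" and vz: "var z \<in> set gs1" using z unfolding zt_def by auto
    have "var z \<in> Kspan (set gs1)" using vz by (rule PV.span_base)
    then have "var z \<in> Kspan (set gs)" using sp1 by simp
    then have "var z \<in> del_nondiv zs ` Kspan G" by (rule subsetD[OF "1.prems"(3)])
    then obtain f where f: "f \<in> Kspan G" "del_nondiv zs f = var z" by (rule imageE) (rule that, assumption, rule sym)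
    have Dz: "D zs (var_term z)" unfolding D_def using zzs by (auto simp: lookup_var_term)
    have "Poly_Mapping.lookup f (var_term z) = 1"
      using arg_cong[OF f(2), of "\<lambda>p. Poly_Mapping.lookup p (var_term z)"] Dz
      by (simp add: lookup_del_nondiv var_def)
    then have vk: "var_term z \<in> Poly_Mapping.keys f" by (simp add: in_keys_iff)
    have zs': "z \<notin> set zs'" using z unfolding zs'_def by simp
    have Wz: "W' z = d" using WW zs' z unfolding w'_def by simp
    have "wt W' t < W' z" if t: "t \<in> Poly_Mapping.keys f" "t \<noteq> var_term z" for t
    proof -
      have nD: "\<not> D zs t"
      proof
        assume "D zs t"
        then have "Poly_Mapping.lookup f t = Poly_Mapping.lookup (var z) t"
          using arg_cong[OF f(2), of "\<lambda>p. Poly_Mapping.lookup p t"] by (simp add: lookup_del_nondiv)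
        also have "\<dots> = 0" using t(2) by (simp add: var_def lookup_single when_def)
        finally show False using t(1) by (simp add: in_keys_iff)
      qed
      have "wt W' t = wt w t"
      proof (rule wt_cong)
        fix i assume "i \<in> Poly_Mapping.keys t"
        then have "i \<notin> set zs" using nD unfolding D_def by (auto simp: in_keys_iff)
        then have "i \<notin> set zs'" "i \<notin> set zt" unfolding zs'_def zt_def by auto
        then show "W' i = w i" using WW unfolding w'_def by simp
      qed
      also have "\<dots> \<le> M * tdeg t" using "1.prems"(4) by (intro wt_bound) blast
      also have "\<dots> \<le> M * \<delta>" using deg f(1) t(1) by simp
      also have "\<dots> < d" by fact
      finally show ?thesis using Wz by simp
    qed
    then show ?thesis using f(1) vk by blast
  qed
  show ?case
  proof (cases "zs' = []")
    case True
    then have W: "W = w'" using unf "1.prems"(1) by simp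
    have "\<forall>k. k \<notin> set zs \<longrightarrow> W k = w k" unfolding W w'_def zt_def by auto
    moreover have "\<forall>z\<in>set zs. z \<in> set zt" using True unfolding zs'_def by (simp add: filter_empty_conv)
    then have "\<forall>z\<in>set zs. \<exists>f\<in>Kspan G. var_term z \<in> Poly_Mapping.keys f \<and>
        (\<forall>t\<in>Poly_Mapping.keys f. t \<noteq> var_term z \<longrightarrow> wt W t < W z)"
      using direct[of _ W] W True by simp
    ultimately show ?thesis by blast
  next
    case False
    have rec: "check_loop \<delta> (\<delta> * d + 1) zs' gs2 w' = Some W" using unf False "1.prems"(1) by simp
    have sub: "set zs' \<subseteq> set zs" unfolding zs'_def by auto
    have "Kspan (set gs2) = del_nondiv zs' ` Kspan (set gs1)"
      unfolding gs2_def set_map by (rule span_image_lin[OF del_nondiv_linear])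
    also have "\<dots> \<subseteq> del_nondiv zs' ` del_nondiv zs ` Kspan G"
      unfolding sp1 using "1.prems"(3) by (rule image_mono)
    also have "\<dots> = del_nondiv zs' ` Kspan G"
      by (simp add: image_image del_nondiv_comp[OF sub])
    finally have sp: "Kspan (set gs2) \<subseteq> del_nondiv zs' ` Kspan G" .
    have wM: "\<forall>i. w' i \<le> max M d" using "1.prems"(4) unfolding w'_def by (simp add: le_max_iff_disj)
    have dM: "max M d * \<delta> < \<delta> * d + 1"
    proof (cases "\<delta> = 0")
      case True then show ?thesis by simp
    next
      case False
      have a: "M * \<delta> < d" by fact
      have b: "d \<le> \<delta> * d" using False by simp
      show ?thesis
      proof (cases "M \<le> d")
        case True then show ?thesis by (simp add: max_def mult.commute)
      next
        case False then have "max M d * \<delta> = M * \<delta>" by simp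
        then show ?thesis using a b by linarith
      qed
    qed
    have IH: "(\<forall>k. k \<notin> set zs' \<longrightarrow> W k = w' k) \<and>
      (\<forall>z\<in>set zs'. \<exists>f\<in>Kspan G. var_term z \<in> Poly_Mapping.keys f \<and>
        (\<forall>t\<in>Poly_Mapping.keys f. t \<noteq> var_term z \<longrightarrow> wt W t < W z))"
      by (rule "1.hyps"[OF gs1_def zt_def ztne w'_def zs'_def gs2_def False rec _ sp wM dM])
        (use "1.prems"(2) in \<open>simp add: zs'_def\<close>)
    have "\<forall>k. k \<notin> set zs \<longrightarrow> W k = w k"
      using IH sub unfolding w'_def zt_def by auto
    moreover have "\<forall>z\<in>set zs. \<exists>f\<in>Kspan G. var_term z \<in> Poly_Mapping.keys f \<and>
        (\<forall>t\<in>Poly_Mapping.keys f. t \<noteq> var_term z \<longrightarrow> wt W t < W z)"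
    proof
      fix z assume "z \<in> set zs"
      then have "z \<in> set zt \<or> z \<in> set zs'" unfolding zs'_def by auto
      then show "\<exists>f\<in>Kspan G. var_term z \<in> Poly_Mapping.keys f \<and>
        (\<forall>t\<in>Poly_Mapping.keys f. t \<noteq> var_term z \<longrightarrow> wt W t < W z)"
        using direct[of z W] IH by blast
    qed
    ultimately show ?thesis by blast
  qed
qed

theorem proposition3p3:
  fixes n :: nat and gs :: "'a::field mpoly list" and zs :: "nat list"
  assumes "\<forall>g\<in>set gs. in_P n g"
    and "distinct zs" and "set zs \<subseteq> {..<n}" and "zs \<noteq> []"
  shows "CHECK n gs zs \<noteq> None \<longleftrightarrow>
    (\<exists>fs. (\<forall>f\<in>set fs. f \<in> ideal_P n gs \<and> f \<in> Kspan (set gs)) \<and> Z_separating n zs fs)"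
proof -
  note inP = assms(1) and dz = assms(2) and zsn = assms(3)
  define \<delta> where "\<delta> = Max (insert 0 (pdeg ` set gs))"
  define gs' where "gs' = map (del_nondiv zs) gs"
  have CHECK_eq: "CHECK n gs zs = (if Kdim (Lin ` set gs') < length zs then None
      else map_option (\<lambda>w. map w [0..<n]) (check_loop \<delta> 1 zs gs' (\<lambda>_. 0)))"
    unfolding CHECK_def Let_def \<delta>_def gs'_def ..
  have termsV: "\<forall>f\<in>Kspan (set gs). in_P n f"
  proof
    fix f assume "f \<in> Kspan (set gs)"
    then have "Poly_Mapping.keys f \<subseteq> (\<Union>g\<in>set gs. Poly_Mapping.keys g)" by (rule keys_span)
    then show "in_P n f" using inP unfolding in_P_def by blast
  qed
  have degV: "\<forall>f\<in>Kspan (set gs). \<forall>t\<in>Poly_Mapping.keys f. tdeg t \<le> \<delta>"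
  proof (intro ballI)
    fix f t assume f: "f \<in> Kspan (set gs)" and t: "t \<in> Poly_Mapping.keys f"
    from keys_span[OF f] t obtain g where g: "g \<in> set gs" "t \<in> Poly_Mapping.keys g" by blast
    have "tdeg t \<le> pdeg g" unfolding pdeg_def using g(2) by (intro Max_ge) auto
    also have "\<dots> \<le> \<delta>" unfolding \<delta>_def using g(1) by (intro Max_ge) auto
    finally show "tdeg t \<le> \<delta>" .
  qed
  have spgs': "Kspan (set gs') = del_nondiv zs ` Kspan (set gs)"
    unfolding gs'_def set_map by (rule span_image_lin[OF del_nondiv_linear])
  show ?thesis
  proof
    assume "CHECK n gs zs \<noteq> None"
    then obtain W where W: "check_loop \<delta> 1 zs gs' (\<lambda>_. 0) = Some W"
      unfolding CHECK_eq by (auto split: if_splits)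
    have "(\<forall>k. k \<notin> set zs \<longrightarrow> W k = 0) \<and>
      (\<forall>z\<in>set zs. \<exists>f\<in>Kspan (set gs). var_term z \<in> Poly_Mapping.keys f \<and>
        (\<forall>t\<in>Poly_Mapping.keys f. t \<noteq> var_term z \<longrightarrow> wt W t < W z))"
      by (rule loop_some[OF degV W dz, of 0]) (use spgs' in auto)
    then have "\<forall>z\<in>set zs. \<exists>f\<in>Kspan (set gs). var_term z \<in> Poly_Mapping.keys f \<and>
        (\<forall>t\<in>Poly_Mapping.keys f. t \<noteq> var_term z \<longrightarrow> wt W t < W z)" by blast
    then obtain F where F: "\<And>z. z \<in> set zs \<Longrightarrow> F z \<in> Kspan (set gs) \<and> var_term z \<in> Poly_Mapping.keys (F z) \<and>
        (\<forall>t\<in>Poly_Mapping.keys (F z). t \<noteq> var_term z \<longrightarrow> wt W t < W z)"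
      by metis
    define fs where "fs = map F zs"
    have LTz: "LT (wle W) (F z) = var_term z" if z: "z \<in> set zs" for z
    proof (rule LT_eqI)
      show "var_term z \<in> Poly_Mapping.keys (F z)" using F[OF z] by blast
      show "\<forall>s\<in>Poly_Mapping.keys (F z). wle W s (var_term z)"
        using F[OF z] by (auto simp: wle_def wt_var)
      show "\<forall>s\<in>Poly_Mapping.keys (F z). wle W (var_term z) s \<longrightarrow> s = var_term z"
        using F[OF z] by (force simp: wle_def wt_var)
    qed
    have "Z_separating n zs fs"
      unfolding Z_separating_def
    proof (intro conjI exI[of _ "wle W"] allI impI)
      show "length fs = length zs" unfolding fs_def by simp
      show "term_ordering n (wle W)" by (rule wle_term_ordering)
      fix i assume i: "i < length zs"
      then have z: "zs ! i \<in> set zs" by simp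
      show "fs ! i \<noteq> 0" using F[OF z] i unfolding fs_def by auto
      show "LT (wle W) (fs ! i) = var_term (zs ! i)" using LTz[OF z] i unfolding fs_def by simp
    qed
    moreover have "\<forall>f\<in>set fs. f \<in> ideal_P n gs \<and> f \<in> Kspan (set gs)"
    proof
      fix f assume "f \<in> set fs"
      then obtain z where z: "z \<in> set zs" "f = F z" unfolding fs_def by auto
      then have "f \<in> Kspan (set gs)" using F by blast
      then show "f \<in> ideal_P n gs \<and> f \<in> Kspan (set gs)" using span_in_ideal by blast
    qed
    ultimately show "\<exists>fs. (\<forall>f\<in>set fs. f \<in> ideal_P n gs \<and> f \<in> Kspan (set gs)) \<and> Z_separating n zs fs"
      by blast
  next
    assume "\<exists>fs. (\<forall>f\<in>set fs. f \<in> ideal_P n gs \<and> f \<in> Kspan (set gs)) \<and> Z_separating n zs fs"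
    then obtain fs tle where fs: "\<forall>f\<in>set fs. f \<in> Kspan (set gs)" "length fs = length zs"
      and TO: "term_ordering n tle"
      and lt: "\<forall>i<length zs. fs ! i \<noteq> 0 \<and> LT tle (fs ! i) = var_term (zs ! i)"
      unfolding Z_separating_def by blast
    have hyp: "\<forall>z\<in>set zs. \<exists>f\<in>Kspan (set gs). var_term z \<in> Poly_Mapping.keys f \<and>
                 (\<forall>s\<in>Poly_Mapping.keys f. tle s (var_term z))"
    proof
      fix z assume "z \<in> set zs"
      then obtain i where i: "i < length zs" "z = zs ! i" by (auto simp: in_set_conv_nth)
      have fi: "fs ! i \<in> Kspan (set gs)" using fs i by simp
      have "LT tle (fs ! i) \<in> Poly_Mapping.keys (fs ! i) \<and>
          (\<forall>s\<in>Poly_Mapping.keys (fs ! i). tle s (LT tle (fs ! i)))"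
        using LT_prop[OF TO] termsV fi lt i by blast
      then show "\<exists>f\<in>Kspan (set gs). var_term z \<in> Poly_Mapping.keys f \<and>
                 (\<forall>s\<in>Poly_Mapping.keys f. tle s (var_term z))"
        using fi lt i by auto
    qed
    have "\<not> Kdim (Lin ` set gs') < length zs"
      using kdim_ok[OF TO hyp zsn dz] unfolding gs'_def by simp
    moreover have "check_loop \<delta> 1 zs gs' (\<lambda>_. 0) \<noteq> None"
      by (rule loop_ok[OF TO hyp termsV zsn]) (use dz assms(4) spgs' in auto)
    ultimately show "CHECK n gs zs \<noteq> None" unfolding CHECK_eq by simp
  qed
qed

end
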